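(* Let $H_i$ ($i\in\mathbb{N}$) and $H$ be functions $[0,T]\times\mathbb{R}^n\times\mathbb{R}^n\to\mathbb{R}$, each satisfying (H1)–(H4) and (HLC). Let $(\mathbb{R}^{n+1},f_i,l_i)$ and $(\mathbb{R}^{n+1},f,l)$ be the Steiner representations of $H_i$ and $H$ (as defined in the context). If for every $t\in[0,T]$ the functions $H_i(t,\cdot,\cdot)$ converge to $H(t,\cdot,\cdot)$ uniformly on compact subsets of $\mathbb{R}^n\times\mathbb{R}^n$, then for every $t\in[0,T]$, $f_i(t,\cdot,\cdot)\to f(t,\cdot,\cdot)$ and $l_i(t,\cdot,\cdot)\to l(t,\cdot,\cdot)$ uniformly on compact subsets of $\mathbb{R}^n\times\mathbb{R}^{n+1}$.
   Context: Hypotheses on $H:[0,T]\times\mathbb{R}^n\times\mathbb{R}^n\to\mathbb{R}$: (H1) $H(\cdot,x,p)$ Lebesgue measurable; (H2) $H(t,\cdot,\cdot)$ continuous; (H3) $H(t,x,\cdot)$ convex; (H4) there is a measurable $c\ge0$ with $|H(t,x,p)-H(t,x,q)|\le c(t)(1+|x|)|p-q|$; (HLC) for every $R>0$ there is a measurable $k_R\ge0$ with $|H(t,x,p)-H(t,y,p)|\le k_R(t)(1+|p|)|x-y|$ for $x,y\in\bar B_R$ (closed ball of radius $R$ about $0$), all $p$. $H^*(t,x,v)=\sup_p\{\langle v,p\rangle-H(t,x,p)\}$. Steiner representation: $E(t,x)=\mathrm{epi}\,H^*(t,x,\cdot)\subset\mathbb{R}^{n+1}$; $\Phi(t,x,a)=E(t,x)\cap\bar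 B(a,2d(a,E(t,x)))$ for $a\in\mathbb{R}^{n+1}$ ($d$ = Euclidean distance to a set); Steiner point of a nonempty compact convex $K\subset\mathbb{R}^m$: $s_m(K)=m\int_{S^{m-1}}p\,\max_{y\in K}\langle p,y\rangle\,\mu(dp)$, $\mu$ the normalized rotation-invariant measure on the unit sphere; $e(t,x,a)=s_{n+1}(\Phi(t,x,a))=(f(t,x,a),l(t,x,a))$ with $f\in\mathbb{R}^n$, $l\in\mathbb{R}$. *)

theory Defs
  imports "HOL-Analysis.Analysis"
begin

text \<open>Standing hypotheses (H1)-(H4) and (HLC) on H : [0,T] x R^n x R^n -> R.
  R^n is modelled by a Euclidean space 'a, R^(n+1) by 'a \<times> real.\<close>

definition hyp_H :: "real \<Rightarrow> (real \<Rightarrow> 'a::euclidean_space \<Rightarrow> 'a \<Rightarrow> real) \<Rightarrow> bool" where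
  "hyp_H T H \<longleftrightarrow>
     (\<forall>x p. (\<lambda>t. H t x p) \<in> borel_measurable (lebesgue_on {0..T})) \<and>
     (\<forall>t\<in>{0..T}. continuous_on UNIV (\<lambda>(x, p). H t x p)) \<and>
     (\<forall>t\<in>{0..T}. \<forall>x. convex_on UNIV (H t x)) \<and>
     (\<exists>c. c \<in> borel_measurable (lebesgue_on {0..T}) \<and> (\<forall>t\<in>{0..T}. 0 \<le> c t) \<and>
        (\<forall>t\<in>{0..T}. \<forall>x p q. \<bar>H t x p - H t x q\<bar> \<le> c t * (1 + norm x) * norm (p - q))) \<and>
     (\<forall>R>0. \<exists>k. k \<in> borel_measurable (lebesgue_on {0..T}) \<and> (\<forall>t\<in>{0..T}. 0 \<le> k t) \<and>
        (\<forall>t\<in>{0..T}. \<forall>x\<in>cball 0 R. \<forall>y\<in>cball 0 R. \<forall>p.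
            \<bar>H t x p - H t y p\<bar> \<le> k t * (1 + norm p) * norm (x - y)))"

definition conj_H :: "(real \<Rightarrow> 'a::euclidean_space \<Rightarrow> 'a \<Rightarrow> real) \<Rightarrow> real \<Rightarrow> 'a \<Rightarrow> 'a \<Rightarrow> ereal" where
  "conj_H H t x v = (SUP p. ereal (inner v p - H t x p))"

definition epiE :: "(real \<Rightarrow> 'a::euclidean_space \<Rightarrow> 'a \<Rightarrow> real) \<Rightarrow> real \<Rightarrow> 'a \<Rightarrow> ('a \<times> real) set" where
  "epiE H t x = {(v, r). conj_H H t x v \<le> ereal r}"

definition PhiS :: "(real \<Rightarrow> 'a::euclidean_space \<Rightarrow> 'a \<Rightarrow> real) \<Rightarrow> real \<Rightarrow> 'a \<Rightarrow> ('a \<times> real) \<Rightarrow> ('a \<times> real) set" where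
  "PhiS H t x a = epiE H t x \<inter> cball a (2 * infdist a (epiE H t x))"

text \<open>Steiner point s_m(K) = m \<integral>_{S^{m-1}} p max_{y\<in>K} <p,y> \<mu>(dp), where the normalized
  rotation-invariant measure \<mu> on the unit sphere is realised as the image of normalized
  Lebesgue measure on the unit ball under x \<mapsto> x/|x| (cone-measure construction of \<mu>).\<close>
definition support_fun :: "'b::euclidean_space set \<Rightarrow> 'b \<Rightarrow> real" where
  "support_fun K p = (SUP y\<in>K. inner p y)"

definition steiner_point :: "'b::euclidean_space set \<Rightarrow> 'b" where
  "steiner_point K =
     (real DIM('b) / measure lborel (ball (0::'b) 1)) *\<^sub>R
       set_lebesgue_integral lborel (ball (0::'b) 1)
         (\<lambda>x. support_fun K (sgn x) *\<^sub>R sgn x)"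

definition steiner_e :: "(real \<Rightarrow> 'a::euclidean_space \<Rightarrow> 'a \<Rightarrow> real) \<Rightarrow> real \<Rightarrow> 'a \<Rightarrow> ('a \<times> real) \<Rightarrow> 'a \<times> real" where
  "steiner_e H t x a = steiner_point (PhiS H t x a)"

definition steiner_f :: "(real \<Rightarrow> 'a::euclidean_space \<Rightarrow> 'a \<Rightarrow> real) \<Rightarrow> real \<Rightarrow> 'a \<Rightarrow> ('a \<times> real) \<Rightarrow> 'a" where
  "steiner_f H t x a = fst (steiner_e H t x a)"

definition steiner_l :: "(real \<Rightarrow> 'a::euclidean_space \<Rightarrow> 'a \<Rightarrow> real) \<Rightarrow> real \<Rightarrow> 'a \<Rightarrow> ('a \<times> real) \<Rightarrow> real" where
  "steiner_l H t x a = snd (steiner_e H t x a)"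

end

theory Submission
  imports Defs
begin


definition Ep :: "('a::euclidean_space \<Rightarrow> real) \<Rightarrow> ('a \<times> real) set" where
  "Ep \<phi> = {(v, r). \<forall>p. inner v p - \<phi> p \<le> r}"

definition Ph :: "('a::euclidean_space \<Rightarrow> real) \<Rightarrow> 'a \<times> real \<Rightarrow> ('a \<times> real) set" where
  "Ph \<phi> a = Ep \<phi> \<inter> cball a (2 * infdist a (Ep \<phi>))"

lemma Ep_closed: "closed (Ep \<phi>)"
proof -
  have "Ep \<phi> = (\<Inter>p. {z. inner (fst z) p - \<phi> p \<le> snd z})"
    by (auto simp: Ep_def)
  moreover have "closed {z::'a\<times>real. inner (fst z) p - \<phi> p \<le> snd z}" for p
    by (intro closed_Collect_le continuous_intros)
  ultimately show ?thesis by auto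
qed

lemma Ep_convex: "convex (Ep \<phi>)"
  unfolding convex_def Ep_def
proof (clarsimp)
  fix v r v' r' p and u w :: real
  assume h: "\<forall>p. inner v p - \<phi> p \<le> r" "\<forall>p. inner v' p - \<phi> p \<le> r'" "0 \<le> u" "0 \<le> w" "u + w = 1"
  have "u * (inner v p - \<phi> p) \<le> u * r" using h by (simp add: mult_left_mono)
  moreover have "w * (inner v' p - \<phi> p) \<le> w * r'" using h by (simp add: mult_left_mono)
  ultimately have "u * (inner v p - \<phi> p) + w * (inner v' p - \<phi> p) \<le> u * r + w * r'" by linarith
  moreover have "u * (inner v p - \<phi> p) + w * (inner v' p - \<phi> p) = inner (u *\<^sub>R v + w *\<^sub>R v') p - \<phi> p"
    using h(5) by (simp add: inner_add_left algebra_simps) (metis add_diff_cancel_left' mult.commute distrib_left mult_1_right)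
  ultimately show "inner (u *\<^sub>R v + w *\<^sub>R v') p - \<phi> p \<le> u * r + w * r'" by simp
qed

lemma coercive_bound:
  fixes \<phi> :: "'a::euclidean_space \<Rightarrow> real"
  assumes cv: "convex_on UNIV \<phi>" and M: "\<And>p. norm p \<le> 1 \<Longrightarrow> \<bar>\<phi> p\<bar> \<le> M"
  shows "\<phi> p \<ge> - M - 2 * M * norm p"
proof (cases "norm p \<le> 1")
  case True
  have "0 \<le> M" using M[of 0] by simp
  then show ?thesis using M[OF True] by (smt (verit) mult_nonneg_nonneg norm_ge_zero)
next
  case False
  define n where "n = norm p"
  have n1: "n > 1" using False n_def by simp
  define u where "u = (1 / n) *\<^sub>R p"
  have nu: "norm u = 1" using n1 by (auto simp: u_def n_def)
  have "u = (1 - 1/n) *\<^sub>R 0 + (1/n) *\<^sub>R p" by (simp add: u_def)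
  then have "\<phi> u \<le> (1 - 1/n) * \<phi> 0 + (1/n) * \<phi> p"
    using convex_onD[OF cv, of "1/n" 0 p] n1 by simp
  then have "n * \<phi> u \<le> (n - 1) * \<phi> 0 + \<phi> p"
    using n1 by (simp add: field_simps)
  moreover have "\<bar>\<phi> u\<bar> \<le> M" "\<bar>\<phi> 0\<bar> \<le> M" using M nu by auto
  moreover have "0 \<le> M" using M[of 0] by simp
  have a1: "n * \<phi> u \<ge> n * (- M)" using \<open>\<bar>\<phi> u\<bar> \<le> M\<close> n1 by (intro mult_left_mono) auto
  have a2: "(n - 1) * \<phi> 0 \<le> (n - 1) * M" using \<open>\<bar>\<phi> 0\<bar> \<le> M\<close> n1 by (intro mult_left_mono) auto
  have "\<phi> p \<ge> - n * M - (n - 1) * M" using a1 a2 \<open>n * \<phi> u \<le> (n - 1) * \<phi> 0 + \<phi> p\<close> by (simp add: algebra_simps)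
  moreover have "M * n \<ge> 0" using \<open>0 \<le> M\<close> n1 by simp
  ultimately show ?thesis unfolding n_def[symmetric] by (simp add: algebra_simps)
qed

lemma exists_max:
  fixes \<phi> :: "'a::euclidean_space \<Rightarrow> real"
  assumes cont: "continuous_on UNIV \<phi>" and lb: "\<And>p. \<phi> p \<ge> - M - 2 * M * norm p"
    and M0: "\<bar>\<phi> 0\<bar> \<le> M" and d: "\<delta> > 0"
  shows "\<exists>p0. norm p0 \<le> max 1 (2 * (norm v + 4 * M) / \<delta>) \<and>
     (\<forall>q. inner v q - \<phi> q - \<delta> / 2 * (norm q)\<^sup>2 \<le> inner v p0 - \<phi> p0 - \<delta> / 2 * (norm p0)\<^sup>2)"
proof -
  define R where "R = max 1 (2 * (norm v + 4 * M) / \<delta>)"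
  define G where "G q = inner v q - \<phi> q - \<delta> / 2 * (norm q)\<^sup>2" for q
  have Mnn: "M \<ge> 0" using M0 by simp
  have cG: "continuous_on (cball 0 R) G"
    unfolding G_def by (intro continuous_intros continuous_on_subset[OF cont]) auto
  obtain p0 where p0: "p0 \<in> cball 0 R" "\<And>q. q \<in> cball 0 R \<Longrightarrow> G q \<le> G p0"
  proof -
    have "R \<ge> 0" unfolding R_def by linarith
    then have "cball (0::'a) R \<noteq> {}" by simp
    then show ?thesis using continuous_attains_sup[OF compact_cball _ cG] that by blast
  qed
  have "G q \<le> G p0" for q
  proof (cases "q \<in> cball 0 R")
    case True then show ?thesis using p0 by auto
  next
    case False
    define n where "n = norm q"
    have nR: "n > R" using False by (simp add: n_def)
    have R1: "R \<ge> 1" unfolding R_def by simp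
    have "2 * (norm v + 4 * M) / \<delta> \<le> R" unfolding R_def by simp
    then have "2 * (norm v + 4 * M) \<le> R * \<delta>" using d by (simp add: divide_le_eq)
    then have R2: "\<delta> * R / 2 \<ge> norm v + 4 * M" by (simp add: algebra_simps)
    have "\<delta> / 2 * n\<^sup>2 = (\<delta> / 2 * n) * n" by (simp add: power2_eq_square)
    also have "\<dots> > (\<delta> * R / 2) * n"
      using nR R1 d by (intro mult_strict_right_mono) auto
    finally have "\<delta> / 2 * n\<^sup>2 > (\<delta> * R / 2) * n" .
    moreover have "(\<delta> * R / 2) * n \<ge> (norm v + 4 * M) * n"
      using R2 nR R1 by (intro mult_right_mono) auto
    moreover have "2 * M * n \<ge> 2 * M * 1" using nR R1 Mnn by (intro mult_left_mono) auto
    ultimately have big: "\<delta> / 2 * n\<^sup>2 > norm v * n + 2 * M * n + 2 * M"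
      by (simp add: algebra_simps)
    have "inner v q \<le> norm v * n" unfolding n_def by (rule norm_cauchy_schwarz)
    then have "G q < - M" using lb[of q] big unfolding G_def n_def by linarith
    also have "- M \<le> G 0" using M0 by (simp add: G_def)
    also have "G 0 \<le> G p0" using p0 R1 by auto
    finally show ?thesis by simp
  qed
  then show ?thesis using p0(1) unfolding R_def G_def by auto
qed

lemma reg_opt:
  fixes \<phi> :: "'a::euclidean_space \<Rightarrow> real"
  assumes cv: "convex_on UNIV \<phi>" and d: "\<delta> > 0"
    and mx: "\<And>q. inner v q - \<phi> q - \<delta> / 2 * (norm q)\<^sup>2 \<le> inner v p0 - \<phi> p0 - \<delta> / 2 * (norm p0)\<^sup>2"
  shows "inner (v - \<delta> *\<^sub>R p0) q - \<phi> q \<le> inner (v - \<delta> *\<^sub>R p0) p0 - \<phi> p0"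
proof -
  define X where "X = inner v (q - p0) - (\<phi> q - \<phi> p0) - \<delta> * inner p0 (q - p0)"
  define D where "D = (norm (q - p0))\<^sup>2"
  have key: "X \<le> \<delta> / 2 * t * D" if t: "0 < t" "t \<le> 1" for t
  proof -
    define qt where "qt = p0 + t *\<^sub>R (q - p0)"
    have "qt = (1 - t) *\<^sub>R p0 + t *\<^sub>R q" by (simp add: qt_def algebra_simps)
    then have c: "\<phi> qt \<le> (1 - t) * \<phi> p0 + t * \<phi> q"
      using convex_onD[OF cv, of t p0 q] t by simp
    have n: "(norm qt)\<^sup>2 = (norm p0)\<^sup>2 + 2 * t * inner p0 (q - p0) + t\<^sup>2 * D"
      unfolding qt_def D_def power2_norm_eq_inner
      by (simp add: inner_add_left inner_add_right algebra_simps power2_eq_square inner_commute)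
    have iv: "inner v qt = inner v p0 + t * inner v (q - p0)"
      unfolding qt_def by (simp add: inner_add_right)
    have "inner v qt - \<phi> qt - \<delta> / 2 * (norm qt)\<^sup>2 \<le> inner v p0 - \<phi> p0 - \<delta> / 2 * (norm p0)\<^sup>2"
      by (rule mx)
    then have "t * inner v (q - p0) - (\<phi> qt - \<phi> p0) - \<delta> * t * inner p0 (q - p0) - \<delta> / 2 * t\<^sup>2 * D \<le> 0"
      unfolding n iv by (simp add: algebra_simps)
    moreover have "\<phi> qt - \<phi> p0 \<le> t * (\<phi> q - \<phi> p0)" using c by (simp add: algebra_simps)
    ultimately have "t * X \<le> t * (\<delta> / 2 * t * D)"
      unfolding X_def by (simp add: algebra_simps power2_eq_square)
    then show ?thesis using t by simp
  qed
  have "X \<le> 0"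
  proof (rule ccontr)
    assume "\<not> X \<le> 0"
    define t where "t = min 1 (X / (\<delta> * D + 1))"
    have D0: "D \<ge> 0" by (simp add: D_def)
    have pos: "\<delta> * D + 1 > 0" using D0 d by (simp add: add_nonneg_pos)
    have t0: "0 < t" "t \<le> 1" using \<open>\<not> X \<le> 0\<close> pos by (auto simp: t_def)
    have "t \<le> X / (\<delta> * D + 1)" by (simp add: t_def)
    then have tX: "t * (\<delta> * D + 1) \<le> X" using pos by (simp add: pos_le_divide_eq)
    have "0 \<le> t * (\<delta> * D)" using t0 D0 d by simp
    then have "\<delta> / 2 * t * D \<le> t * (\<delta> * D)" by (simp add: algebra_simps)
    also have "\<dots> < t * (\<delta> * D + 1)" using t0 by (simp add: algebra_simps)
    finally have "\<delta> / 2 * t * D < X" using tX by linarith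
    with key[OF t0] show False by simp
  qed
  then show ?thesis unfolding X_def by (simp add: inner_diff_left inner_diff_right algebra_simps)
qed



lemma dist_pair_le: "dist (a, b) (c, d) \<le> dist a c + dist b d"
  using sqrt_sum_squares_le_sum_abs[of "dist a c" "dist b d"] by (simp add: dist_Pair_Pair)

lemma unit_bound:
  fixes \<phi> :: "'a::euclidean_space \<Rightarrow> real"
  assumes "continuous_on UNIV \<phi>"
  shows "\<exists>M. \<forall>p. norm p \<le> 1 \<longrightarrow> \<bar>\<phi> p\<bar> \<le> M"
proof -
  have "compact (\<phi> ` cball 0 1)"
    by (rule compact_continuous_image[OF continuous_on_subset[OF assms] compact_cball]) auto
  then obtain M where "\<forall>y\<in>\<phi> ` cball 0 1. norm y \<le> M" using compact_imp_bounded bounded_iff by metis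
  then have "\<forall>p. norm p \<le> 1 \<longrightarrow> \<bar>\<phi> p\<bar> \<le> M" by auto
  then show ?thesis by blast
qed

lemma Ep_nonempty:
  fixes \<phi> :: "'a::euclidean_space \<Rightarrow> real"
  assumes cv: "convex_on UNIV \<phi>" and ct: "continuous_on UNIV \<phi>"
  shows "Ep \<phi> \<noteq> {}"
proof -
  obtain M where M: "\<And>p. norm p \<le> 1 \<Longrightarrow> \<bar>\<phi> p\<bar> \<le> M" using unit_bound[OF ct] by auto
  obtain p0 where p0: "\<forall>q. inner 0 q - \<phi> q - 1 / 2 * (norm q)\<^sup>2 \<le> inner 0 p0 - \<phi> p0 - 1 / 2 * (norm p0)\<^sup>2"
    using exists_max[OF ct coercive_bound[OF cv M], of 1 0] M[of 0] by auto
  have "inner (0 - 1 *\<^sub>R p0) q - \<phi> q \<le> inner (0 - 1 *\<^sub>R p0) p0 - \<phi> p0" for q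
    by (rule reg_opt[OF cv _ ]) (use p0 in auto)
  then have "(0 - 1 *\<^sub>R p0, inner (0 - 1 *\<^sub>R p0) p0 - \<phi> p0) \<in> Ep \<phi>" by (auto simp: Ep_def)
  then show ?thesis by blast
qed

definition Uconv :: "(nat \<Rightarrow> 'a::euclidean_space \<Rightarrow> real) \<Rightarrow> ('a \<Rightarrow> real) \<Rightarrow> bool" where
  "Uconv \<phi>s \<phi> \<longleftrightarrow> (\<forall>R \<epsilon>. \<epsilon> > 0 \<longrightarrow> eventually (\<lambda>i. \<forall>p. norm p \<le> R \<longrightarrow> \<bar>\<phi>s i p - \<phi> p\<bar> < \<epsilon>) sequentially)"

lemma UconvD: "Uconv \<phi>s \<phi> \<Longrightarrow> \<epsilon> > 0 \<Longrightarrow> eventually (\<lambda>i. \<forall>p. norm p \<le> R \<longrightarrow> \<bar>\<phi>s i p - \<phi> p\<bar> < \<epsilon>) sequentially"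
  unfolding Uconv_def by blast

lemma K1:
  fixes \<phi> :: "'a::euclidean_space \<Rightarrow> real"
  assumes cvs: "\<And>i. convex_on UNIV (\<phi>s i)" and cts: "\<And>i. continuous_on UNIV (\<phi>s i)"
    and ct: "continuous_on UNIV \<phi>" and U: "Uconv \<phi>s \<phi>" and y: "y \<in> Ep \<phi>"
  shows "(\<lambda>i. infdist y (Ep (\<phi>s i))) \<longlonglongrightarrow> 0"
proof -
  obtain v r where yvr: "y = (v, r)" by force
  have yE: "\<And>p. inner v p - \<phi> p \<le> r" using y by (auto simp: yvr Ep_def)
  obtain M0 where M0: "\<And>p. norm p \<le> 1 \<Longrightarrow> \<bar>\<phi> p\<bar> \<le> M0" using unit_bound[OF ct] by auto
  define M where "M = M0 + 1"
  have rM: "r + M0 \<ge> 0" using yE[of 0] M0[of 0] by simp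
  have "\<forall>\<^sub>F i in sequentially. infdist y (Ep (\<phi>s i)) < \<epsilon>" if e: "\<epsilon> > 0" for \<epsilon>
  proof -
    define \<eta> where "\<eta> = min (\<epsilon> / 2) 1"
    have eta: "\<eta> > 0" "\<eta> \<le> \<epsilon> / 2" "\<eta> \<le> 1" using e by (auto simp: \<eta>_def)
    define \<delta> where "\<delta> = \<epsilon>\<^sup>2 / (16 * (r + M + 1))"
    have rM1: "r + M + 1 > 0" using rM by (simp add: M_def)
    have d: "\<delta> > 0" using e rM1 by (simp add: \<delta>_def)
    define R where "R = max 1 (2 * (norm v + 4 * M) / \<delta>)"
    have ev1: "\<forall>\<^sub>F i in sequentially. \<forall>p. norm p \<le> 1 \<longrightarrow> \<bar>\<phi>s i p - \<phi> p\<bar> < 1"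
      by (rule UconvD[OF U]) simp
    have ev2: "\<forall>\<^sub>F i in sequentially. \<forall>p. norm p \<le> R \<longrightarrow> \<bar>\<phi>s i p - \<phi> p\<bar> < \<eta>"
      by (rule UconvD[OF U]) (use eta in simp)
    show ?thesis using ev1 ev2
    proof eventually_elim
      case (elim i)
      have Mi: "\<bar>\<phi>s i p\<bar> \<le> M" if "norm p \<le> 1" for p
        using elim(1) M0[OF that] that unfolding M_def by force
      have Mi0: "\<bar>\<phi>s i 0\<bar> \<le> M" using Mi[of 0] by simp
      obtain p where pR: "norm p \<le> R" and pmax: "\<forall>q. inner v q - \<phi>s i q - \<delta> / 2 * (norm q)\<^sup>2 \<le> inner v p - \<phi>s i p - \<delta> / 2 * (norm p)\<^sup>2"
        using exists_max[OF cts coercive_bound[OF cvs Mi] _ d, of v] Mi[of 0] unfolding R_def by auto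
      have reg: "inner (v - \<delta> *\<^sub>R p) q - \<phi>s i q \<le> inner (v - \<delta> *\<^sub>R p) p - \<phi>s i p" for q
        by (rule reg_opt[OF cvs d]) (use pmax in auto)
      have pp: "inner p p = (norm p)\<^sup>2" by (simp add: power2_norm_eq_inner)
      have close: "\<phi>s i p > \<phi> p - \<eta>" using elim(2) pR by force
      have np0: "0 \<le> \<delta> * (norm p)\<^sup>2" using d by simp
      have "inner (v - \<delta> *\<^sub>R p) p - \<phi>s i p = inner v p - \<phi>s i p - \<delta> * (norm p)\<^sup>2"
        by (simp add: inner_diff_left pp)
      also have "\<dots> \<le> r + \<eta>" using yE[of p] close np0 by linarith
      finally have wE: "(v - \<delta> *\<^sub>R p, r + \<eta>) \<in> Ep (\<phi>s i)"
        using reg unfolding Ep_def by (auto intro: order_trans)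
      have "0 - \<phi>s i 0 - \<delta> / 2 * (norm (0::'a))\<^sup>2 \<le> inner v p - \<phi>s i p - \<delta> / 2 * (norm p)\<^sup>2"
        using pmax by (metis inner_zero_right)
      then have "\<delta> / 2 * (norm p)\<^sup>2 \<le> inner v p - \<phi>s i p + \<phi>s i 0" by simp
      also have "\<dots> \<le> r + 1 + M" using yE[of p] close Mi0 eta by linarith
      finally have b: "\<delta> * (norm p)\<^sup>2 \<le> 2 * (r + 1 + M)" by simp
      have "(norm (\<delta> *\<^sub>R p))\<^sup>2 = \<delta> * (\<delta> * (norm p)\<^sup>2)" using d by (simp add: power2_eq_square)
      also have "\<dots> \<le> \<delta> * (2 * (r + 1 + M))" using b d by (intro mult_left_mono) auto
      also have "\<dots> = \<epsilon>\<^sup>2 / 8" unfolding \<delta>_def using rM1 by (simp add: field_simps)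
      also have "\<dots> < (\<epsilon> / 2)\<^sup>2" using e by (simp add: power2_eq_square field_simps)
      finally have "norm (\<delta> *\<^sub>R p) < \<epsilon> / 2"
        by (rule power_less_imp_less_base) (use e in simp)
      then have "dist y (v - \<delta> *\<^sub>R p, r + \<eta>) < \<epsilon>"
        using dist_pair_le[of v r "v - \<delta> *\<^sub>R p" "r + \<eta>"] eta unfolding yvr
        by (simp add: dist_norm)
      then show ?case using infdist_le[OF wE, of y] by linarith
    qed
  qed
  then show ?thesis
    by (intro tendstoI) (simp add: infdist_nonneg)
qed

lemma K2:
  fixes \<phi> :: "'a::euclidean_space \<Rightarrow> real"
  assumes U: "Uconv \<phi>s \<phi>" and z: "z \<notin> Ep \<phi>"
  shows "\<exists>N. open N \<and> z \<in> N \<and> eventually (\<lambda>i. N \<inter> Ep (\<phi>s i) = {}) sequentially"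
proof -
  obtain v r where zvr: "z = (v, r)" by force
  obtain p where p: "inner v p - \<phi> p > r" using z by (auto simp: zvr Ep_def not_le)
  define \<gamma> where "\<gamma> = (inner v p - \<phi> p - r) / 3"
  have g: "\<gamma> > 0" using p by (simp add: \<gamma>_def)
  define \<rho> where "\<rho> = min \<gamma> (\<gamma> / (norm p + 1))"
  have rho: "\<rho> > 0" using g by (simp add: \<rho>_def add_nonneg_pos)
  have ev: "\<forall>\<^sub>F i in sequentially. \<forall>q. norm q \<le> norm p \<longrightarrow> \<bar>\<phi>s i q - \<phi> q\<bar> < \<gamma>"
    by (rule UconvD[OF U g])
  have "\<forall>\<^sub>F i in sequentially. ball z \<rho> \<inter> Ep (\<phi>s i) = {}"
    using ev
  proof eventually_elim
    case (elim i)
    have "w \<notin> Ep (\<phi>s i)" if w: "w \<in> ball z \<rho>" for w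
    proof -
      obtain v' r' where wvr: "w = (v', r')" by force
      have d1: "dist v v' < \<rho>" using w dist_fst_le[of z w] by (simp add: zvr wvr)
      have d2: "dist r r' < \<rho>" using w dist_snd_le[of z w] by (simp add: zvr wvr)
      have "\<bar>inner v p - inner v' p\<bar> \<le> norm (v - v') * norm p"
        by (metis Cauchy_Schwarz_ineq2 inner_diff_left)
      also have "\<dots> \<le> \<rho> * norm p" using d1 by (intro mult_right_mono) (auto simp: dist_norm)
      also have "\<dots> \<le> \<gamma> / (norm p + 1) * norm p" unfolding \<rho>_def by (intro mult_right_mono) auto
      also have "\<dots> \<le> \<gamma>"
      proof -
        have "norm p / (norm p + 1) \<le> 1" by (simp add: divide_le_eq add_nonneg_pos)
        then have "\<gamma> * (norm p / (norm p + 1)) \<le> \<gamma> * 1" using g by (intro mult_left_mono) auto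
        then show ?thesis by simp
      qed
      finally have i1: "\<bar>inner v p - inner v' p\<bar> \<le> \<gamma>" .
      have i2: "\<bar>\<phi>s i p - \<phi> p\<bar> < \<gamma>" using elim by auto
      have i3: "\<bar>r - r'\<bar> < \<gamma>" using d2 unfolding \<rho>_def dist_real_def by linarith
      have g3: "3 * \<gamma> = inner v p - \<phi> p - r" unfolding \<gamma>_def by simp
      have "inner v' p - \<phi>s i p > r'" using i1 i2 i3 g3 by linarith
      then show ?thesis by (auto simp: wvr Ep_def not_le intro: exI[of _ p])
    qed
    then show ?case by blast
  qed
  then show ?thesis using rho by (intro exI[of _ "ball z \<rho>"]) auto
qed

lemma compact_eventually_disjoint:
  assumes C: "compact C"
    and loc: "\<And>z. z \<in> C \<Longrightarrow> \<exists>N. open N \<and> z \<in> N \<and> eventually (\<lambda>i. N \<inter> S i = {}) F"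
  shows "eventually (\<lambda>i. C \<inter> S i = {}) F"
proof -
  obtain N where N: "\<And>z. z \<in> C \<Longrightarrow> open (N z) \<and> z \<in> N z \<and> eventually (\<lambda>i. N z \<inter> S i = {}) F"
    using loc by metis
  obtain D where D: "D \<subseteq> C" "finite D" "C \<subseteq> (\<Union>z\<in>D. N z)"
    using compactE_image[OF C, of C N] N by blast
  have "eventually (\<lambda>i. \<forall>z\<in>D. N z \<inter> S i = {}) F"
    using D N by (intro eventually_ball_finite) auto
  then show ?thesis by eventually_elim (use D in blast)
qed



lemma infdist_lessE:
  assumes "A \<noteq> {}" "infdist x A < e"
  obtains y where "y \<in> A" "dist x y < e"
proof -
  have "(INF a\<in>A. dist x a) < e" using assms by (simp add: infdist_notempty)
  moreover have "bdd_below ((\<lambda>a. dist x a) ` A)" by (metis bdd_belowI2 zero_le_dist)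
  ultimately have "\<exists>y\<in>A. dist x y < e" using cINF_less_iff[OF assms(1)] by blast
  then show ?thesis using that by blast
qed

lemma sf_upper:
  fixes K :: "'b::euclidean_space set"
  assumes "bounded K" "y \<in> K"
  shows "inner u y \<le> support_fun K u"
proof -
  obtain B where B: "\<And>y. y \<in> K \<Longrightarrow> norm y \<le> B" using assms(1) bounded_iff by metis
  have "inner u y \<le> norm u * B" if "y \<in> K" for y
    using norm_cauchy_schwarz[of u y] B[OF that] by (meson mult_left_mono norm_ge_zero order_trans)
  then have "bdd_above ((\<lambda>y. inner u y) ` K)" by (meson bdd_aboveI2)
  then show ?thesis unfolding support_fun_def using assms(2) by (rule cSUP_upper2) simp
qed

lemma sf_least:
  fixes K :: "'b::euclidean_space set"
  assumes "K \<noteq> {}" "\<And>y. y \<in> K \<Longrightarrow> inner u y \<le> c"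
  shows "support_fun K u \<le> c"
  unfolding support_fun_def using assms by (intro cSUP_least) auto

lemma sf_attain:
  fixes K :: "'b::euclidean_space set"
  assumes "compact K" "K \<noteq> {}"
  obtains y where "y \<in> K" "support_fun K u = inner u y"
proof -
  obtain y where y: "y \<in> K" "\<And>z. z \<in> K \<Longrightarrow> inner u z \<le> inner u y"
  proof -
    have "continuous_on K (\<lambda>z. inner u z)" by (intro continuous_intros)
    then show ?thesis using continuous_attains_sup[OF assms(1,2), of "\<lambda>z. inner u z"] that by blast
  qed
  have "support_fun K u = inner u y"
    using sf_upper[OF compact_imp_bounded[OF assms(1)] y(1), of u] sf_least[OF assms(2) y(2)] by (simp add: antisym)
  then show ?thesis using that y(1) by blast
qed

lemma Ph_sub: "Ph \<phi> a \<subseteq> Ep \<phi>" by (simp add: Ph_def)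

lemma Ph_props:
  fixes \<phi> :: "'a::euclidean_space \<Rightarrow> real"
  assumes "Ep \<phi> \<noteq> {}"
  shows "Ph \<phi> a \<noteq> {}" "compact (Ph \<phi> a)" "\<And>y. y \<in> Ph \<phi> a \<Longrightarrow> dist a y \<le> 2 * infdist a (Ep \<phi>)"
    "\<And>y. y \<in> Ph \<phi> a \<Longrightarrow> norm y \<le> norm a + 2 * infdist a (Ep \<phi>)"
proof -
  obtain z where z: "z \<in> Ep \<phi>" "infdist a (Ep \<phi>) = dist a z"
    using infdist_attains_inf[OF Ep_closed assms] by metis
  have "dist a z \<le> 2 * infdist a (Ep \<phi>)" using z by simp
  then show "Ph \<phi> a \<noteq> {}" using z by (auto simp: Ph_def)
  show "compact (Ph \<phi> a)" unfolding Ph_def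
    by (simp add: Ep_closed closed_Int_compact)
  show "dist a y \<le> 2 * infdist a (Ep \<phi>)" if "y \<in> Ph \<phi> a" for y using that by (simp add: Ph_def)
  show "norm y \<le> norm a + 2 * infdist a (Ep \<phi>)" if "y \<in> Ph \<phi> a" for y
    using that norm_triangle_ineq2[of y a] by (simp add: Ph_def dist_norm norm_minus_commute)
qed

locale conv_setup =
  fixes \<phi>s :: "nat \<Rightarrow> 'a::euclidean_space \<Rightarrow> real" and \<phi> :: "'a \<Rightarrow> real"
  assumes cvs: "\<And>i. convex_on UNIV (\<phi>s i)" and cts: "\<And>i. continuous_on UNIV (\<phi>s i)"
    and cv: "convex_on UNIV \<phi>" and ct: "continuous_on UNIV \<phi>" and U: "Uconv \<phi>s \<phi>"
begin

lemma ne: "Ep \<phi> \<noteq> {}" "Ep (\<phi>s i) \<noteq> {}"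
  using Ep_nonempty cv ct cvs cts by auto

lemma dist_conv:
  assumes as: "as \<longlonglongrightarrow> a"
  shows "(\<lambda>i. infdist (as i) (Ep (\<phi>s i))) \<longlonglongrightarrow> infdist a (Ep \<phi>)"
proof -
  define d where "d = infdist a (Ep \<phi>)"
  have "\<forall>\<^sub>F i in sequentially. dist (infdist (as i) (Ep (\<phi>s i))) d < \<epsilon>" if e: "\<epsilon> > 0" for \<epsilon>
  proof -
  have "infdist a (Ep \<phi>) < d + \<epsilon> / 3" using e by (simp add: d_def)
  then obtain y where y: "y \<in> Ep \<phi>" "dist a y < d + \<epsilon> / 3"
    by (rule infdist_lessE[OF ne(1)])
  have ev1: "\<forall>\<^sub>F i in sequentially. infdist y (Ep (\<phi>s i)) < \<epsilon> / 3"
    using order_tendstoD(2)[OF K1[OF cvs cts ct U y(1)], of "\<epsilon> / 3"] e by simp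
  have ev2: "\<forall>\<^sub>F i in sequentially. dist (as i) a < \<epsilon> / 4"
    using tendstoD[OF as, of "\<epsilon> / 4"] e by simp
  define C where "C = cball a (d - \<epsilon> / 2)"
  have ev3: "\<forall>\<^sub>F i in sequentially. C \<inter> Ep (\<phi>s i) = {}"
  proof (rule compact_eventually_disjoint)
    show "compact C" by (simp add: C_def)
    fix z assume "z \<in> C"
    then have "dist a z \<le> d - \<epsilon> / 2" by (simp add: C_def)
    then have "z \<notin> Ep \<phi>" using infdist_le[of z "Ep \<phi>" a] e unfolding d_def by linarith
    then show "\<exists>N. open N \<and> z \<in> N \<and> (\<forall>\<^sub>F i in sequentially. N \<inter> Ep (\<phi>s i) = {})"
      by (rule K2[OF U])
  qed
  show "\<forall>\<^sub>F i in sequentially. dist (infdist (as i) (Ep (\<phi>s i))) d < \<epsilon>"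
    using ev1 ev2 ev3
  proof eventually_elim
    case (elim i)
    have "infdist (as i) (Ep (\<phi>s i)) \<le> infdist y (Ep (\<phi>s i)) + dist (as i) y"
      by (rule infdist_triangle)
    moreover have "dist (as i) y \<le> dist (as i) a + dist a y" by (rule dist_triangle)
    ultimately have up: "infdist (as i) (Ep (\<phi>s i)) < d + \<epsilon>" using elim y e by linarith
    have lo: "infdist (as i) (Ep (\<phi>s i)) > d - \<epsilon>"
    proof (rule ccontr)
      assume "\<not> ?thesis"
      then have "infdist (as i) (Ep (\<phi>s i)) < d - 3 * \<epsilon> / 4" using e by linarith
      then obtain w where w: "w \<in> Ep (\<phi>s i)" "dist (as i) w < d - 3 * \<epsilon> / 4"
        by (rule infdist_lessE[OF ne(2)])
      have "dist a w \<le> dist a (as i) + dist (as i) w" by (rule dist_triangle)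
      moreover have "dist a (as i) = dist (as i) a" by (rule dist_commute)
      ultimately have "dist a w \<le> d - \<epsilon> / 2" using w elim(2) by linarith
      then have "w \<in> C" by (simp add: C_def)
      then have "w \<in> C \<inter> Ep (\<phi>s i)" using w(1) by simp
      then show False using elim(3) by simp
    qed
    show ?case using up lo unfolding dist_real_def by linarith
  qed
  qed
  then show ?thesis unfolding d_def by (intro tendstoI)
qed

end



lemma inner_dist_le: "\<bar>inner u y - inner u z\<bar> \<le> norm u * dist y z"
  by (metis Cauchy_Schwarz_ineq2 dist_norm inner_diff_right)

context conv_setup
begin

lemma sf_conv:
  assumes as: "as \<longlonglongrightarrow> a"
  shows "(\<lambda>i. support_fun (Ph (\<phi>s i) (as i)) u) \<longlonglongrightarrow> support_fun (Ph \<phi> a) u"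
proof -
  define d where "d i = infdist (as i) (Ep (\<phi>s i))" for i
  define d0 where "d0 = infdist a (Ep \<phi>)"
  define P where "P i = Ph (\<phi>s i) (as i)" for i
  define P0 where "P0 = Ph \<phi> a"
  define h0 where "h0 = support_fun P0 u"
  have dconv: "d \<longlonglongrightarrow> d0" unfolding d_def d0_def using dist_conv[OF as] by simp
  have Pne: "P i \<noteq> {}" for i unfolding P_def by (rule Ph_props(1)[OF ne(2)])
  have Pd: "\<And>y. y \<in> P i \<Longrightarrow> dist (as i) y \<le> 2 * d i" for i
    unfolding P_def d_def by (rule Ph_props(3)[OF ne(2)])
  have Pb: "bounded (P i)" for i unfolding P_def by (rule compact_imp_bounded[OF Ph_props(2)[OF ne(2)]])
  have PE: "P i \<subseteq> Ep (\<phi>s i)" for i unfolding P_def by (rule Ph_sub)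
  have P0ne: "P0 \<noteq> {}" and P0c: "compact P0" and P0d: "\<And>y. y \<in> P0 \<Longrightarrow> dist a y \<le> 2 * d0"
    unfolding P0_def d0_def by (rule Ph_props[OF ne(1)])+
  have Pdef: "w \<in> P i \<longleftrightarrow> w \<in> Ep (\<phi>s i) \<and> dist (as i) w \<le> 2 * d i" for w i
    by (simp add: P_def Ph_def d_def)
  have P0def: "w \<in> P0 \<longleftrightarrow> w \<in> Ep \<phi> \<and> dist a w \<le> 2 * d0" for w
    by (simp add: P0_def Ph_def d0_def)
  have d0nn: "d0 \<ge> 0" by (simp add: d0_def infdist_nonneg)
  show ?thesis
  proof (cases "d0 = 0")
    case True
    have aE: "a \<in> Ep \<phi>" using True in_closed_iff_infdist_zero[OF Ep_closed ne(1)] by (simp add: d0_def)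
    have "P0 = {a}" using aE True by (auto simp: P0def)
    then have h0a: "support_fun P0 u = inner u a" by (simp add: support_fun_def)
    define B where "B i = norm u * (2 * d i + dist (as i) a)" for i
    have bnd: "\<bar>inner u y - inner u a\<bar> \<le> B i" if "y \<in> P i" for y i
    proof -
      have "dist y a \<le> dist y (as i) + dist (as i) a" by (rule dist_triangle)
      also have "dist y (as i) = dist (as i) y" by (rule dist_commute)
      finally have "dist y a \<le> 2 * d i + dist (as i) a" using Pd[OF that] by linarith
      then have "norm u * dist y a \<le> B i" unfolding B_def by (intro mult_left_mono) auto
      then show ?thesis using inner_dist_le[of u y a] by linarith
    qed
    have up: "support_fun (P i) u \<le> inner u a + B i" for i
      by (rule sf_least[OF Pne]) (use bnd in force)
    have lo: "support_fun (P i) u \<ge> inner u a - B i" for i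
    proof -
      obtain y where y: "y \<in> P i" using Pne by blast
      have "inner u y \<le> support_fun (P i) u" by (rule sf_upper[OF Pb y])
      then show ?thesis using bnd[OF y] by linarith
    qed
    have "B \<longlonglongrightarrow> norm u * (2 * d0 + dist a a)"
      unfolding B_def by (intro tendsto_intros dconv as)
    then have B0: "B \<longlonglongrightarrow> 0" using True by simp
    have l1: "(\<lambda>i. inner u a - B i) \<longlonglongrightarrow> inner u a"
      using tendsto_diff[OF tendsto_const B0, of "inner u a"] by simp
    have l2: "(\<lambda>i. inner u a + B i) \<longlonglongrightarrow> inner u a"
      using tendsto_add[OF tendsto_const B0, of "inner u a"] by simp
    have "(\<lambda>i. support_fun (P i) u) \<longlonglongrightarrow> inner u a"
      by (rule tendsto_sandwich[OF always_eventually always_eventually l1 l2]) (use lo up in blast)+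
    then show ?thesis using h0a by (simp add: P_def P0_def)
  next
    case False
    then have d0p: "d0 > 0" using d0nn by simp
    have "\<forall>\<^sub>F i in sequentially. dist (support_fun (P i) u) h0 < \<epsilon>" if e: "\<epsilon> > 0" for \<epsilon>
    proof -
      have dev: "\<forall>\<^sub>F i in sequentially. \<bar>d i - d0\<bar> < r" if "r > 0" for r
        using tendstoD[OF dconv that] by (simp add: dist_real_def)
      have aev: "\<forall>\<^sub>F i in sequentially. dist (as i) a < r" if "r > 0" for r
        using tendstoD[OF as that] by simp
      have q4: "\<And>r::real. r > 0 \<Longrightarrow> r / 4 > 0" by simp
      define C where "C = cball a (2 * d0 + 1) \<inter> {z. inner u z \<ge> h0 + \<epsilon> / 2}"
      have evC: "\<forall>\<^sub>F i in sequentially. C \<inter> P i = {}"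
      proof (rule compact_eventually_disjoint)
        show "compact C" unfolding C_def
          by (intro compact_Int_closed compact_cball closed_halfspace_ge)
        fix z assume zC: "z \<in> C"
        show "\<exists>N. open N \<and> z \<in> N \<and> (\<forall>\<^sub>F i in sequentially. N \<inter> P i = {})"
        proof (cases "z \<in> Ep \<phi>")
          case False
          then obtain N where N: "open N" "z \<in> N" "\<forall>\<^sub>F i in sequentially. N \<inter> Ep (\<phi>s i) = {}"
            using K2[OF U] by blast
          have "\<forall>\<^sub>F i in sequentially. N \<inter> P i = {}"
            using N(3) by eventually_elim (use PE in blast)
          then show ?thesis using N by blast
        next
          case True
          have far: "dist a z > 2 * d0"
          proof (rule ccontr)
            assume "\<not> ?thesis"
            then have "z \<in> P0" using True by (simp add: P0def)
            then have "inner u z \<le> h0" unfolding h0_def by (rule sf_upper[OF compact_imp_bounded[OF P0c]])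
            then show False using zC e by (simp add: C_def)
          qed
          define \<rho> where "\<rho> = (dist a z - 2 * d0) / 2"
          have rho: "\<rho> > 0" using far by (simp add: \<rho>_def)
          have "\<forall>\<^sub>F i in sequentially. ball z \<rho> \<inter> P i = {}"
            using dev[OF q4[OF rho]] aev[OF q4[OF rho]]
          proof eventually_elim
            case (elim i)
            show ?case
            proof (rule ccontr)
              assume "ball z \<rho> \<inter> P i \<noteq> {}"
              then obtain w where w: "w \<in> ball z \<rho>" "w \<in> P i" by blast
              have "dist a z \<le> dist a (as i) + dist (as i) z" by (rule dist_triangle)
              moreover have "dist (as i) z \<le> dist (as i) w + dist w z" by (rule dist_triangle)
              moreover have "dist a (as i) = dist (as i) a" by (rule dist_commute)
              moreover have "dist w z = dist z w" by (rule dist_commute)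
              moreover have "dist z w < \<rho>" using w(1) by simp
              moreover have "dist (as i) w \<le> 2 * d i" by (rule Pd[OF w(2)])
              ultimately have "dist a z < 2 * d0 + 2 * \<rho>" using elim by linarith
              moreover have "2 * \<rho> = dist a z - 2 * d0" unfolding \<rho>_def by simp
              ultimately show False by linarith
            qed
          qed
          then show ?thesis using rho by (intro exI[of _ "ball z \<rho>"]) auto
        qed
      qed
      have evU: "\<forall>\<^sub>F i in sequentially. support_fun (P i) u \<le> h0 + \<epsilon> / 2"
        using evC dev[OF q4[OF zero_less_one]] aev[OF q4[OF zero_less_one]]
      proof eventually_elim
        case (elim i)
        show ?case
        proof (rule sf_least[OF Pne])
          fix w assume w: "w \<in> P i"
          have "dist a w \<le> dist a (as i) + dist (as i) w" by (rule dist_triangle)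
          moreover have "dist a (as i) = dist (as i) a" by (rule dist_commute)
          moreover have "dist (as i) w \<le> 2 * d i" by (rule Pd[OF w])
          ultimately have "dist a w \<le> 2 * d0 + 1" using elim by linarith
          then have "w \<in> cball a (2 * d0 + 1)" by simp
          moreover have "w \<notin> C" using elim(1) w by blast
          ultimately show "inner u w \<le> h0 + \<epsilon> / 2" by (simp add: C_def)
        qed
      qed
      obtain y where y: "y \<in> P0" "h0 = inner u y"
        unfolding h0_def by (rule sf_attain[OF P0c P0ne])
      have "infdist a (Ep \<phi>) < 2 * d0" using d0p by (simp add: d0_def)
      then obtain z0 where z0: "z0 \<in> Ep \<phi>" "dist a z0 < 2 * d0"
        by (rule infdist_lessE[OF ne(1)])
      define \<Delta> where "\<Delta> = \<bar>inner u z0 - inner u y\<bar>"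
      define lm where "lm = min (1/2) (\<epsilon> / (8 * (\<Delta> + 1)))"
      have D0: "\<Delta> \<ge> 0" by (simp add: \<Delta>_def)
      have "\<epsilon> / (8 * (\<Delta> + 1)) > 0" using e D0 by (intro divide_pos_pos) auto
      then have lam1: "lm > 0" unfolding lm_def by simp
      have lam2: "lm \<le> 1/2" unfolding lm_def by (rule min.cobounded1)
      note lam = lam1 lam2
      have "lm \<le> \<epsilon> / (8 * (\<Delta> + 1))" by (simp add: lm_def)
      then have "lm * (8 * (\<Delta> + 1)) \<le> \<epsilon>" using D0 by (simp add: le_divide_eq)
      then have lD: "lm * \<Delta> \<le> \<epsilon> / 8" using lam by (simp add: algebra_simps)
      define yl where "yl = (1 - lm) *\<^sub>R y + lm *\<^sub>R z0"
      have yE: "y \<in> Ep \<phi>" and yd: "dist a y \<le> 2 * d0" using y(1) by (auto simp: P0def)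
      have ylE: "yl \<in> Ep \<phi>" unfolding yl_def
        using convexD[OF Ep_convex yE z0(1), of "1 - lm" lm] lam by simp
      have "a - yl = (1 - lm) *\<^sub>R (a - y) + lm *\<^sub>R (a - z0)"
        by (simp add: yl_def algebra_simps)
      then have "dist a yl \<le> (1 - lm) * dist a y + lm * dist a z0"
        using norm_triangle_ineq[of "(1 - lm) *\<^sub>R (a - y)" "lm *\<^sub>R (a - z0)"] lam
        by (simp add: dist_norm)
      moreover have "(1 - lm) * dist a y \<le> (1 - lm) * (2 * d0)" using yd lam by (intro mult_left_mono) auto
      moreover have "lm * dist a z0 < lm * (2 * d0)" using z0(2) lam by (intro mult_strict_left_mono) auto
      ultimately have ylfar: "dist a yl < 2 * d0" by (simp add: algebra_simps)
      define \<kappa> where "\<kappa> = 2 * d0 - dist a yl"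
      have kap: "\<kappa> > 0" using ylfar by (simp add: \<kappa>_def)
      have "inner u yl = h0 + lm * (inner u z0 - inner u y)"
        by (simp add: yl_def y(2) inner_add_right algebra_simps)
      moreover have "lm * (inner u z0 - inner u y) \<ge> - (lm * \<Delta>)"
      proof -
        have "- \<Delta> \<le> inner u z0 - inner u y"
          unfolding \<Delta>_def using abs_ge_minus_self[of "inner u z0 - inner u y"] by linarith
        then have "lm * (- \<Delta>) \<le> lm * (inner u z0 - inner u y)" using lam by (intro mult_left_mono) auto
        then show ?thesis by simp
      qed
      ultimately have ylu: "inner u yl \<ge> h0 - \<epsilon> / 8" using lD by linarith
      define \<rho> where "\<rho> = min (\<kappa> / 4) (\<epsilon> / (8 * (norm u + 1)))"
      have rho: "\<rho> > 0" using kap e by (simp add: \<rho>_def add_nonneg_pos)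
      have "norm u * \<rho> \<le> norm u * (\<epsilon> / (8 * (norm u + 1)))"
        by (intro mult_left_mono) (auto simp: \<rho>_def)
      also have "\<dots> \<le> \<epsilon> / 8"
      proof -
        have "norm u / (norm u + 1) \<le> 1" by (simp add: divide_le_eq add_nonneg_pos)
        then have "\<epsilon> / 8 * (norm u / (norm u + 1)) \<le> \<epsilon> / 8 * 1" using e by (intro mult_left_mono) auto
        then show ?thesis by (simp add: field_simps)
      qed
      finally have urho: "norm u * \<rho> \<le> \<epsilon> / 8" .
      have ev1: "\<forall>\<^sub>F i in sequentially. infdist yl (Ep (\<phi>s i)) < \<rho>"
        using order_tendstoD(2)[OF K1[OF cvs cts ct U ylE] rho] .
      have evL: "\<forall>\<^sub>F i in sequentially. support_fun (P i) u \<ge> h0 - \<epsilon> / 4"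
        using ev1 dev[OF q4[OF kap]] aev[OF q4[OF kap]]
      proof eventually_elim
        case (elim i)
        obtain w where w: "w \<in> Ep (\<phi>s i)" "dist yl w < \<rho>"
          by (rule infdist_lessE[OF ne(2) elim(1)])
        have "dist (as i) w \<le> dist (as i) a + dist a w" by (rule dist_triangle)
        moreover have "dist a w \<le> dist a yl + dist yl w" by (rule dist_triangle)
        moreover have "\<rho> \<le> \<kappa> / 4" unfolding \<rho>_def by (rule min.cobounded1)
        moreover have "d i > d0 - \<kappa> / 4" using elim(2) abs_ge_minus_self[of "d i - d0"] by linarith
        moreover note elim(3) w(2)
        ultimately have "dist (as i) w \<le> 2 * d i" unfolding \<kappa>_def by (simp add: field_simps)
        then have wP: "w \<in> P i" using w(1) by (simp add: Pdef)
        have "inner u w \<ge> inner u yl - norm u * dist yl w" using inner_dist_le[of u yl w] by linarith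
        moreover have "norm u * dist yl w \<le> norm u * \<rho>" using w(2) by (intro mult_left_mono) auto
        moreover have "inner u w \<le> support_fun (P i) u" by (rule sf_upper[OF Pb wP])
        ultimately show ?case using ylu urho by linarith
      qed
      show ?thesis using evU evL
      proof eventually_elim
        case (elim i)
        then show ?case unfolding dist_real_def using e by linarith
      qed
    qed
    then have "(\<lambda>i. support_fun (P i) u) \<longlonglongrightarrow> h0" by (intro tendstoI)
    then show ?thesis by (simp add: P_def h0_def P0_def)
  qed
qed

end



lemma sf_lip:
  fixes K :: "'b::euclidean_space set"
  assumes ne: "K \<noteq> {}" and B: "\<And>y. y \<in> K \<Longrightarrow> norm y \<le> Bd"
  shows "support_fun K u \<le> support_fun K u' + Bd * dist u u'"
proof -
  have bK: "bounded K" using B by (auto simp: bounded_iff)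
  show ?thesis
  proof (rule sf_least[OF ne])
    fix y assume y: "y \<in> K"
    have "inner u y = inner u' y + inner (u - u') y" by (simp add: inner_diff_left)
    also have "inner (u - u') y \<le> norm (u - u') * norm y" by (rule norm_cauchy_schwarz)
    also have "norm (u - u') * norm y \<le> norm (u - u') * Bd" using B[OF y] by (intro mult_left_mono) auto
    also have "inner u' y \<le> support_fun K u'" by (rule sf_upper[OF bK y])
    finally show "inner u y \<le> support_fun K u' + Bd * dist u u'" by (simp add: dist_norm mult.commute)
  qed
qed

lemma sf_abs:
  fixes K :: "'b::euclidean_space set"
  assumes ne: "K \<noteq> {}" and B: "\<And>y. y \<in> K \<Longrightarrow> norm y \<le> Bd"
  shows "\<bar>support_fun K u\<bar> \<le> norm u * Bd"
proof -
  have bK: "bounded K" using B by (auto simp: bounded_iff)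
  have up: "support_fun K u \<le> norm u * Bd"
  proof (rule sf_least[OF ne])
    fix y assume y: "y \<in> K"
    have "inner u y \<le> norm u * norm y" by (rule norm_cauchy_schwarz)
    also have "\<dots> \<le> norm u * Bd" using B[OF y] by (intro mult_left_mono) auto
    finally show "inner u y \<le> norm u * Bd" .
  qed
  obtain y where y: "y \<in> K" using ne by blast
  have "- (norm u * Bd) \<le> - (norm u * norm y)" using B[OF y] by (simp add: mult_left_mono)
  also have "- (norm u * norm y) \<le> inner u y" using Cauchy_Schwarz_ineq2[of u y] by linarith
  also have "inner u y \<le> support_fun K u" by (rule sf_upper[OF bK y])
  finally show ?thesis using up by linarith
qed

lemma sf_cont:
  fixes K :: "'b::euclidean_space set"
  assumes ne: "K \<noteq> {}" and B: "\<And>y. y \<in> K \<Longrightarrow> norm y \<le> Bd"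
  shows "continuous_on UNIV (support_fun K)"
proof -
  have Bd: "Bd \<ge> 0" using ne B norm_ge_zero order_trans by blast
  have "Bd-lipschitz_on UNIV (support_fun K)"
  proof (rule lipschitz_onI[OF _ Bd])
    fix x y :: 'b
    show "dist (support_fun K x) (support_fun K y) \<le> Bd * dist x y"
      using sf_lip[OF ne B, of x y] sf_lip[OF ne B, of y x]
      by (simp add: dist_real_def dist_commute abs_le_iff)
  qed
  then show ?thesis by (rule lipschitz_on_continuous_on)
qed

lemma integrand_meas:
  fixes K :: "'b::euclidean_space set"
  assumes ne: "K \<noteq> {}" and B: "\<And>y. y \<in> K \<Longrightarrow> norm y \<le> Bd"
  shows "(\<lambda>x. indicator (ball (0::'b) 1) x *\<^sub>R (support_fun K (sgn x) *\<^sub>R sgn x)) \<in> borel_measurable lborel"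
proof -
  have c: "support_fun K \<in> borel_measurable borel"
    by (rule borel_measurable_continuous_onI[OF sf_cont[OF ne B]])
  have "(\<lambda>x. support_fun K (sgn x)) \<in> borel_measurable borel"
    using measurable_compose[OF borel_measurable_sgn c] by (simp add: comp_def)
  then have m1: "(\<lambda>x. support_fun K (sgn x) *\<^sub>R sgn x) \<in> borel_measurable borel"
    by (intro borel_measurable_scaleR borel_measurable_sgn)
  have m2: "indicator (ball (0::'b) 1) \<in> (borel_measurable borel :: ('b \<Rightarrow> real) set)"
    by (intro borel_measurable_indicator) simp
  have "(\<lambda>x. indicator (ball (0::'b) 1) x *\<^sub>R (support_fun K (sgn x) *\<^sub>R sgn x)) \<in> borel_measurable borel"
    by (rule borel_measurable_scaleR[OF m2 m1])
  then show ?thesis by simp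
qed

context conv_setup
begin

lemma steiner_conv:
  assumes as: "as \<longlonglongrightarrow> a"
  shows "(\<lambda>i. steiner_point (Ph (\<phi>s i) (as i))) \<longlonglongrightarrow> steiner_point (Ph \<phi> a)"
proof -
  define P where "P i = Ph (\<phi>s i) (as i)" for i
  define P0 where "P0 = Ph \<phi> a"
  define Nb where "Nb i = norm (as i) + 2 * infdist (as i) (Ep (\<phi>s i))" for i
  define Nb0 where "Nb0 = norm a + 2 * infdist a (Ep \<phi>)"
  define S where "S = ball (0::'a \<times> real) 1"
  have Pne: "P i \<noteq> {}" for i unfolding P_def by (rule Ph_props(1)[OF ne(2)])
  have PB: "\<And>y. y \<in> P i \<Longrightarrow> norm y \<le> Nb i" for i
    unfolding P_def Nb_def by (rule Ph_props(4)[OF ne(2)])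
  have P0ne: "P0 \<noteq> {}" unfolding P0_def by (rule Ph_props(1)[OF ne(1)])
  have P0B: "\<And>y. y \<in> P0 \<Longrightarrow> norm y \<le> Nb0"
    unfolding P0_def Nb0_def by (rule Ph_props(4)[OF ne(1)])
  have "Nb \<longlonglongrightarrow> Nb0" unfolding Nb_def Nb0_def by (intro tendsto_intros as dist_conv)
  then have "Bseq Nb" by (intro convergent_imp_Bseq) (auto simp: convergent_def)
  then obtain Bd where Bd: "Bd > 0" "\<And>i. norm (Nb i) \<le> Bd" by (metis BseqE)
  have NbB: "Nb i \<le> Bd" for i using Bd(2)[of i] by simp
  define F where "F i x = indicator S x *\<^sub>R (support_fun (P i) (sgn x) *\<^sub>R sgn x)" for i x
  define F0 where "F0 x = indicator S x *\<^sub>R (support_fun P0 (sgn x) *\<^sub>R sgn x)" for x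
  have "(\<lambda>i. integral\<^sup>L lborel (F i)) \<longlonglongrightarrow> integral\<^sup>L lborel F0"
  proof (rule integral_dominated_convergence[where w = "\<lambda>x. indicator S x * Bd"])
    show "F0 \<in> borel_measurable lborel" unfolding F0_def S_def by (rule integrand_meas[OF P0ne P0B])
    show "F i \<in> borel_measurable lborel" for i unfolding F_def S_def by (rule integrand_meas[OF Pne PB])
    have "integrable lborel (indicator S :: 'a \<times> real \<Rightarrow> real)"
      unfolding S_def by (intro integrable_real_indicator emeasure_bounded_finite) auto
    then show "integrable lborel (\<lambda>x. indicator S x * Bd)" by (rule integrable_mult_left)
    show "AE x in lborel. (\<lambda>i. F i x) \<longlonglongrightarrow> F0 x"
    proof (rule AE_I2)
      fix x
      show "(\<lambda>i. F i x) \<longlonglongrightarrow> F0 x" unfolding F_def F0_def P_def P0_def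
        by (intro tendsto_scaleR tendsto_const sf_conv[OF as])
    qed
    show "AE x in lborel. norm (F i x) \<le> indicator S x * Bd" for i
    proof (rule AE_I2)
      fix x
      have Nb0: "Nb i \<ge> 0" unfolding Nb_def using infdist_nonneg[of "as i"] by simp
      have "\<bar>support_fun (P i) (sgn x)\<bar> \<le> norm (sgn x) * Nb i" by (rule sf_abs[OF Pne PB])
      also have "\<dots> \<le> 1 * Bd" using NbB[of i] Bd(1) Nb0
        by (intro mult_mono) (auto simp: norm_sgn)
      finally have "norm (support_fun (P i) (sgn x) *\<^sub>R sgn x) \<le> Bd"
        by (simp add: norm_sgn) (smt (verit) mult_cancel_left1 mult_left_le)
      then show "norm (F i x) \<le> indicator S x * Bd"
        unfolding F_def by (simp add: indicator_def)
    qed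
  qed
  then have "(\<lambda>i. (real DIM('a \<times> real) / measure lborel S) *\<^sub>R integral\<^sup>L lborel (F i))
      \<longlonglongrightarrow> (real DIM('a \<times> real) / measure lborel S) *\<^sub>R integral\<^sup>L lborel F0"
    by (intro tendsto_scaleR tendsto_const)
  then show ?thesis
    unfolding steiner_point_def set_lebesgue_integral_def F_def F0_def P_def P0_def S_def .
qed

end



lemma epiE_Ep: "epiE H t x = Ep (H t x)"
  unfolding epiE_def Ep_def conj_H_def by (auto simp: SUP_le_iff)

lemma steiner_e_Ph: "steiner_e H t x a = steiner_point (Ph (H t x) a)"
  unfolding steiner_e_def PhiS_def Ph_def epiE_Ep ..

lemma Uconv_reduce:
  fixes Gs :: "nat \<Rightarrow> 'a::euclidean_space \<Rightarrow> 'a \<Rightarrow> real"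
  assumes ul: "\<And>K. compact K \<Longrightarrow> uniform_limit K (\<lambda>i (x, p). Gs i x p) (\<lambda>(x, p). g x p) sequentially"
    and cg: "continuous_on UNIV (\<lambda>(x, p). g x p)"
    and xs: "xs \<longlonglongrightarrow> x"
  shows "Uconv (\<lambda>i. Gs i (xs i)) (g x)"
  unfolding Uconv_def
proof (intro allI impI)
  fix R \<epsilon> :: real assume e: "\<epsilon> > 0"
  define C where "C = insert x (range xs) \<times> cball (0::'a) R"
  have cC: "compact C" unfolding C_def
    by (intro compact_Times compact_sequence_with_limit[OF xs] compact_cball)
  have ev1: "\<forall>\<^sub>F i in sequentially. \<forall>z\<in>C. dist ((\<lambda>(x, p). Gs i x p) z) ((\<lambda>(x, p). g x p) z) < \<epsilon> / 2"
    using uniform_limitD[OF ul[OF cC], of "\<epsilon> / 2"] e by simp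
  have "uniformly_continuous_on C (\<lambda>(x, p). g x p)"
    by (rule compact_uniformly_continuous[OF continuous_on_subset[OF cg] cC]) simp
  moreover have e2: "\<epsilon> / 2 > 0" using e by simp
  ultimately have "\<exists>d>0. \<forall>z\<in>C. \<forall>z'\<in>C. dist z' z < d \<longrightarrow> dist ((\<lambda>(x, p). g x p) z') ((\<lambda>(x, p). g x p) z) < \<epsilon> / 2"
    unfolding uniformly_continuous_on_def by blast
  then obtain \<delta> where d: "\<delta> > 0"
    and dd: "\<And>z z'. z \<in> C \<Longrightarrow> z' \<in> C \<Longrightarrow> dist z' z < \<delta> \<Longrightarrow> dist ((\<lambda>(x, p). g x p) z') ((\<lambda>(x, p). g x p) z) < \<epsilon> / 2"
    by blast
  have ev2: "\<forall>\<^sub>F i in sequentially. dist (xs i) x < \<delta>" using tendstoD[OF xs d] .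
  show "\<forall>\<^sub>F i in sequentially. \<forall>p. norm p \<le> R \<longrightarrow> \<bar>Gs i (xs i) p - g x p\<bar> < \<epsilon>"
    using ev1 ev2
  proof eventually_elim
    case (elim i)
    show ?case
    proof (intro allI impI)
      fix p :: 'a assume p: "norm p \<le> R"
      have z1: "(xs i, p) \<in> C" and z2: "(x, p) \<in> C" using p by (auto simp: C_def)
      have a1: "\<bar>Gs i (xs i) p - g (xs i) p\<bar> < \<epsilon> / 2" using elim(1) z1 by (force simp: dist_real_def)
      have "dist (xs i, p) (x, p) = dist (xs i) x" by (simp add: dist_Pair_Pair)
      then have "dist ((\<lambda>(x, p). g x p) (xs i, p)) ((\<lambda>(x, p). g x p) (x, p)) < \<epsilon> / 2"
        using dd[OF z2 z1] elim(2) by simp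
      then have a2: "\<bar>g (xs i) p - g x p\<bar> < \<epsilon> / 2" by (simp add: dist_real_def)
      show "\<bar>Gs i (xs i) p - g x p\<bar> < \<epsilon>" using a1 a2 by linarith
    qed
  qed
qed

lemma seq_key:
  fixes Gs :: "nat \<Rightarrow> 'a::euclidean_space \<Rightarrow> 'a \<Rightarrow> real"
  assumes ul: "\<And>K. compact K \<Longrightarrow> uniform_limit K (\<lambda>i (x, p). Gs i x p) (\<lambda>(x, p). g x p) sequentially"
    and cg: "continuous_on UNIV (\<lambda>(x, p). g x p)"
    and cGs: "\<And>i. continuous_on UNIV (\<lambda>(x, p). Gs i x p)"
    and vg: "\<And>x. convex_on UNIV (g x)" and vGs: "\<And>i x. convex_on UNIV (Gs i x)"
    and zs: "zs \<longlonglongrightarrow> z"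
  shows "(\<lambda>i. steiner_point (Ph (Gs i (fst (zs i))) (snd (zs i)))) \<longlonglongrightarrow> steiner_point (Ph (g (fst z)) (snd z))"
proof -
  have pc: "continuous_on UNIV (G y)" if "continuous_on UNIV (\<lambda>(x, p). G x p)" for G :: "'a \<Rightarrow> 'a \<Rightarrow> real" and y
  proof -
    have "continuous_on UNIV ((\<lambda>(x, p). G x p) \<circ> (\<lambda>p. (y, p)))"
      by (intro continuous_on_compose continuous_intros continuous_on_subset[OF that]) auto
    then show ?thesis by (simp add: comp_def)
  qed
  have xs: "(\<lambda>i. fst (zs i)) \<longlonglongrightarrow> fst z" and as: "(\<lambda>i. snd (zs i)) \<longlonglongrightarrow> snd z"
    using zs by (auto intro: tendsto_fst tendsto_snd)
  interpret conv_setup "\<lambda>i. Gs i (fst (zs i))" "g (fst z)"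
  proof
    show "convex_on UNIV (Gs i (fst (zs i)))" for i by (rule vGs)
    show "continuous_on UNIV (Gs i (fst (zs i)))" for i by (rule pc[OF cGs])
    show "convex_on UNIV (g (fst z))" by (rule vg)
    show "continuous_on UNIV (g (fst z))" by (rule pc[OF cg])
    show "Uconv (\<lambda>i. Gs i (fst (zs i))) (g (fst z))" by (rule Uconv_reduce[OF ul cg xs])
  qed
  show ?thesis by (rule steiner_conv[OF as])
qed

lemma uniform_limit_fst:
  assumes "uniform_limit K f l F"
  shows "uniform_limit K (\<lambda>n z. fst (f n z)) (\<lambda>z. fst (l z)) F"
  unfolding uniform_limit_iff
proof (intro allI impI)
  fix e :: real assume e: "e > 0"
  have "\<forall>\<^sub>F n in F. \<forall>x\<in>K. dist (f n x) (l x) < e" using uniform_limitD[OF assms e] .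
  then show "\<forall>\<^sub>F n in F. \<forall>x\<in>K. dist (fst (f n x)) (fst (l x)) < e"
  proof (rule eventually_mono)
    fix n assume "\<forall>x\<in>K. dist (f n x) (l x) < e"
    then show "\<forall>x\<in>K. dist (fst (f n x)) (fst (l x)) < e"
      using dist_fst_le order_le_less_trans by blast
  qed
qed

lemma uniform_limit_snd:
  assumes "uniform_limit K f l F"
  shows "uniform_limit K (\<lambda>n z. snd (f n z)) (\<lambda>z. snd (l z)) F"
  unfolding uniform_limit_iff
proof (intro allI impI)
  fix e :: real assume e: "e > 0"
  have "\<forall>\<^sub>F n in F. \<forall>x\<in>K. dist (f n x) (l x) < e" using uniform_limitD[OF assms e] .
  then show "\<forall>\<^sub>F n in F. \<forall>x\<in>K. dist (snd (f n x)) (snd (l x)) < e"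
  proof (rule eventually_mono)
    fix n assume "\<forall>x\<in>K. dist (f n x) (l x) < e"
    then show "\<forall>x\<in>K. dist (snd (f n x)) (snd (l x)) < e"
      using dist_snd_le order_le_less_trans by blast
  qed
qed



lemma hypD:
  assumes h: "hyp_H T H" and t: "t \<in> {0..T}"
  shows "continuous_on UNIV (\<lambda>(x, p). H t x p)" "\<And>x. convex_on UNIV (H t x)"
proof -
  have a: "\<forall>t\<in>{0..T}. continuous_on UNIV (\<lambda>(x, p). H t x p)"
    using h unfolding hyp_H_def by (elim conjE) assumption
  have b: "\<forall>t\<in>{0..T}. \<forall>x. convex_on UNIV (H t x)"
    using h unfolding hyp_H_def by (elim conjE) assumption
  show "continuous_on UNIV (\<lambda>(x, p). H t x p)" by (rule bspec[OF a t])
  show "convex_on UNIV (H t x)" for x using b t by (simp)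
qed

theorem theorem4p3:
  fixes T :: real
    and Hs :: "nat \<Rightarrow> real \<Rightarrow> 'a::euclidean_space \<Rightarrow> 'a \<Rightarrow> real"
    and H :: "real \<Rightarrow> 'a \<Rightarrow> 'a \<Rightarrow> real"
  assumes "\<And>i. hyp_H T (Hs i)"
    and "hyp_H T H"
    and "\<And>t K. t \<in> {0..T} \<Longrightarrow> compact K \<Longrightarrow>
           uniform_limit K (\<lambda>i (x, p). Hs i t x p) (\<lambda>(x, p). H t x p) sequentially"
  shows "\<forall>t\<in>{0..T}. \<forall>K. compact K \<longrightarrow>
           uniform_limit K (\<lambda>i (x, a). steiner_f (Hs i) t x a) (\<lambda>(x, a). steiner_f H t x a) sequentially \<and>
           uniform_limit K (\<lambda>i (x, a). steiner_l (Hs i) t x a) (\<lambda>(x, a). steiner_l H t x a) sequentially"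
proof (intro ballI allI impI)
  fix t and K :: "('a \<times> 'a \<times> real) set"
  assume t: "t \<in> {0..T}" and K: "compact K"
  have cH: "continuous_on UNIV (\<lambda>(x, p). H t x p)" and vH: "\<And>x. convex_on UNIV (H t x)"
    using hypD[OF assms(2) t] by auto
  have cHs: "\<And>i. continuous_on UNIV (\<lambda>(x, p). Hs i t x p)" and vHs: "\<And>i x. convex_on UNIV (Hs i t x)"
    using hypD[OF assms(1) t] by auto
  have ul: "\<And>K. compact K \<Longrightarrow> uniform_limit K (\<lambda>i (x, p). Hs i t x p) (\<lambda>(x, p). H t x p) sequentially"
    using assms(3)[OF t] .
  define E where "E i z = steiner_e (Hs i) t (fst z) (snd z)" for i z
  define E0 where "E0 z = steiner_e H t (fst z) (snd z)" for z
  have UE: "uniform_limit K E E0 sequentially"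
  proof (rule ccontr)
    assume "\<not> uniform_limit K E E0 sequentially"
    then obtain e :: real where e: "e > 0"
      and ne: "\<not> eventually (\<lambda>n. \<forall>z\<in>K. dist (E n z) (E0 z) < e) sequentially"
      unfolding uniform_limit_iff by blast
    then have "\<forall>N. \<exists>n\<ge>N. \<not> (\<forall>z\<in>K. dist (E n z) (E0 z) < e)"
      unfolding not_eventually frequently_sequentially by blast
    then have "\<forall>N. \<exists>n\<ge>N. n \<in> {n. \<exists>z\<in>K. dist (E n z) (E0 z) \<ge> e}"
      by (auto simp: not_less)
    then have "infinite {n. \<exists>z\<in>K. dist (E n z) (E0 z) \<ge> e}"
      using infinite_nat_iff_unbounded_le by blast
    then obtain \<sigma> :: "nat \<Rightarrow> nat" where sig: "strict_mono \<sigma>"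
      and sn: "\<And>n. \<sigma> n \<in> {n. \<exists>z\<in>K. dist (E n z) (E0 z) \<ge> e}"
      using infinite_enumerate by blast
    have "\<forall>n. \<exists>z. z \<in> K \<and> dist (E (\<sigma> n) z) (E0 z) \<ge> e" using sn by blast
    then obtain zs where zs: "\<forall>n. zs n \<in> K \<and> dist (E (\<sigma> n) (zs n)) (E0 (zs n)) \<ge> e"
      by (rule choice[THEN exE])
    then have zs1: "\<And>n. zs n \<in> K" and zs2: "\<And>n. dist (E (\<sigma> n) (zs n)) (E0 (zs n)) \<ge> e" by auto
    obtain l r where l: "l \<in> K" and r: "strict_mono (r :: nat \<Rightarrow> nat)" and lim: "(zs \<circ> r) \<longlonglongrightarrow> l"
    proof (rule seq_compactE[OF compact_imp_seq_compact[OF K], of zs])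
      show "\<forall>n. zs n \<in> K" using zs1 by blast
    qed
    define \<tau> where "\<tau> = \<sigma> \<circ> r"
    have tau: "strict_mono \<tau>" unfolding \<tau>_def using sig r by (simp add: strict_mono_def)
    have ul': "uniform_limit K' (\<lambda>k (x, p). Hs (\<tau> k) t x p) (\<lambda>(x, p). H t x p) sequentially"
      if "compact K'" for K'
      using filterlim_compose[OF ul[OF that] filterlim_subseq[OF tau]] by simp
    have c1: "(\<lambda>k. steiner_point (Ph (Hs (\<tau> k) t (fst ((zs \<circ> r) k))) (snd ((zs \<circ> r) k))))
        \<longlonglongrightarrow> steiner_point (Ph (H t (fst l)) (snd l))"
      by (rule seq_key[OF ul' cH cHs vH vHs lim])
    have c2: "(\<lambda>k. steiner_point (Ph (H t (fst ((zs \<circ> r) k))) (snd ((zs \<circ> r) k))))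
        \<longlonglongrightarrow> steiner_point (Ph (H t (fst l)) (snd l))"
    proof (rule seq_key[OF _ cH cH vH vH lim])
      show "uniform_limit K' (\<lambda>k (x, p). H t x p) (\<lambda>(x, p). H t x p) sequentially" for K'
        by (rule uniform_limit_const)
    qed
    have "(\<lambda>k. dist (E (\<tau> k) (zs (r k))) (E0 (zs (r k))))
        \<longlonglongrightarrow> dist (steiner_point (Ph (H t (fst l)) (snd l))) (steiner_point (Ph (H t (fst l)) (snd l)))"
      using tendsto_dist[OF c1 c2] by (simp add: E_def E0_def steiner_e_Ph)
    then have "(\<lambda>k. dist (E (\<tau> k) (zs (r k))) (E0 (zs (r k)))) \<longlonglongrightarrow> 0" by simp
    then have "\<forall>\<^sub>F k in sequentially. dist (E (\<tau> k) (zs (r k))) (E0 (zs (r k))) < e"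
      using order_tendstoD(2) e by blast
    then obtain k where "dist (E (\<tau> k) (zs (r k))) (E0 (zs (r k))) < e"
      by (rule eventually_happens'[OF sequentially_bot, THEN exE])
    moreover have "dist (E (\<tau> k) (zs (r k))) (E0 (zs (r k))) \<ge> e"
      using zs2[of "r k"] by (simp add: \<tau>_def)
    ultimately show False by linarith
  qed
  have eqf: "(\<lambda>i (x, a). steiner_f (Hs i) t x a) = (\<lambda>i z. fst (E i z))"
    "(\<lambda>(x, a). steiner_f H t x a) = (\<lambda>z. fst (E0 z))"
    "(\<lambda>i (x, a). steiner_l (Hs i) t x a) = (\<lambda>i z. snd (E i z))"
    "(\<lambda>(x, a). steiner_l H t x a) = (\<lambda>z. snd (E0 z))"
    by (auto simp: fun_eq_iff E_def E0_def steiner_f_def steiner_l_def)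
  show "uniform_limit K (\<lambda>i (x, a). steiner_f (Hs i) t x a) (\<lambda>(x, a). steiner_f H t x a) sequentially \<and>
        uniform_limit K (\<lambda>i (x, a). steiner_l (Hs i) t x a) (\<lambda>(x, a). steiner_l H t x a) sequentially"
    unfolding eqf using uniform_limit_fst[OF UE] uniform_limit_snd[OF UE] by blast
qed


end
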